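(* Let $k\ge 2$. Suppose that $1/\epsilon\le\binom{d/2}{k-1}$ and that the failure probability $\delta<1$ is a constant. Then for $n\ge 1/\epsilon$, the space complexity of any valid For-All-Itemset-Frequency-Indicator sketch satisfies $|\mathcal{S}(n,d,k,\epsilon,\delta)|=\Omega(d/\epsilon)$.
   Context: A database is $\mathcal{D}\in(\{0,1\}^d)^n$ ($n$ rows, $d$ binary columns). An itemset is $T\subseteq[d]$; a $k$-itemset has $|T|=k$. A row contains $T$ if it has a 1 in every column of $T$; $f_T(\mathcal{D})$ is the fraction of rows containing $T$. A For-All-Itemset-Frequency-Indicator sketch is a pair $(\mathcal{S},\mathcal{Q})$ where $\mathcal{S}$ is a randomized algorithm mapping $(\mathcal{D},k,\epsilon,\delta)$ to a bit string (summary) and $\mathcal{Q}$ is a deterministic procedure mapping a summary and a $k$-itemset $T$ to a bit, such that for every database $\mathcal{D}$, with probability at least $1-\delta$ over the randomness of $\mathcal{S}$, simultaneously for all $k$-itemsets $T$: if $f_T>\epsilon$ then $\mathcal{Q}$ outputs 1, and if $f_T<\epsilon/2$ then $\mathcal{Q}$ outputs 0. The space complexity $|\mathcal{S}(n,d,k,\epsilon,\delta)|$ is the maximum length in bits of the summary over all $\mathcal{D}\in(\{0,1\}^d)^n$. *)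

theory Defs
  imports "HOL-Probability.Probability"
begin

definition databases :: "nat \<Rightarrow> nat \<Rightarrow> bool list list set" where
  "databases n d = {D. length D = n \<and> (\<forall>r\<in>set D. length r = d)}"

definition itemsets :: "nat \<Rightarrow> nat \<Rightarrow> nat set set" where
  "itemsets d k = {T. T \<subseteq> {..<d} \<and> card T = k}"

definition contains :: "bool list \<Rightarrow> nat set \<Rightarrow> bool" where
  "contains r T \<longleftrightarrow> (\<forall>j\<in>T. r ! j)"

definition freq :: "nat set \<Rightarrow> bool list list \<Rightarrow> real" where
  "freq T D = real (length (filter (\<lambda>r. contains r T) D)) / real (length D)"

text \<open>A (randomized) summary algorithm S (for fixed parameters n,d,k,eps,delta) maps a database
  to a distribution over bit strings; Q is a deterministic query procedure.\<close>
definition valid_faifi_sketch ::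
  "(bool list list \<Rightarrow> bool list pmf) \<Rightarrow> (bool list \<Rightarrow> nat set \<Rightarrow> bool)
    \<Rightarrow> nat \<Rightarrow> nat \<Rightarrow> nat \<Rightarrow> real \<Rightarrow> real \<Rightarrow> bool" where
  "valid_faifi_sketch S Q n d k eps delta \<longleftrightarrow>
     (\<forall>D\<in>databases n d.
        measure_pmf.prob (S D)
          {s. \<forall>T\<in>itemsets d k. (freq T D > eps \<longrightarrow> Q s T) \<and> (freq T D < eps / 2 \<longrightarrow> \<not> Q s T)}
        \<ge> 1 - delta)"

text \<open>Space complexity: maximum length (in bits) of a summary over all databases
  (as an extended natural, since a pmf may have infinite support).\<close>
definition space :: "(bool list list \<Rightarrow> bool list pmf) \<Rightarrow> nat \<Rightarrow> nat \<Rightarrow> enat" where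
  "space S n d = (SUP D\<in>databases n d. SUP s\<in>set_pmf (S D). enat (length s))"

end

theory Submission
  imports Defs
begin

lemma card_bool_lists_le: "card {xs::bool list. length xs \<le> L} < 2 ^ Suc L"
proof -
  have e: "{xs::bool list. length xs \<le> L} = {xs. set xs \<subseteq> UNIV \<and> length xs \<le> L}" by auto
  have s: "(\<Sum>i\<le>L. (2::nat) ^ i) < 2 ^ Suc L" by (induction L) auto
  show ?thesis unfolding e using card_lists_length_le[of "UNIV::bool set" L] s by simp
qed

lemma finite_bool_lists_le: "finite {xs::bool list. length xs \<le> L}"
proof -
  have e: "{xs::bool list. length xs \<le> L} = {xs. set xs \<subseteq> UNIV \<and> length xs \<le> L}" by auto
  show ?thesis unfolding e by (rule finite_lists_length_le) simp
qed

lemma aux_lin: "(r::real) \<le> 2 * a \<Longrightarrow> a \<le> 3 * b \<Longrightarrow> 0 \<le> b \<Longrightarrow> r / 16 \<le> b"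
  by linarith

lemma core:
  assumes k2: "k \<ge> 2" and hd: "2*h \<le> d" and m1: "1 \<le> m"
    and mch: "m \<le> h choose (k-1)" and mbn: "m*b \<le> n" and beps: "real b > eps * real n"
    and eps: "eps > 0"
    and valid: "valid_faifi_sketch S Q n d k eps delta" and dl: "delta < 1"
  shows "enat (m*h) \<le> space S n d"
proof -
  have fin: "finite {A. A \<subseteq> {..<h} \<and> card A = k-1}" by simp
  have "card {..<m} \<le> card {A. A \<subseteq> {..<h} \<and> card A = k-1}"
    using n_subsets[of "{..<h}" "k-1"] mch by simp
  then obtain Sf where Sf: "Sf ` {..<m} \<subseteq> {A. A \<subseteq> {..<h} \<and> card A = k-1}"
    and Sinj: "inj_on Sf {..<m}"
    using card_le_inj[OF _ fin] by blast
  define row where "row X i = map (\<lambda>j. if j < h then j \<in> Sf i else j - h \<in> X i) [0..<d]" for X :: "nat \<Rightarrow> nat set" and i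
  define DB where "DB X = concat (map (\<lambda>i. replicate b (row X i)) [0..<m]) @ replicate (n - m*b) (replicate d False)" for X
  define F where "F = PiE {..<m} (\<lambda>_. Pow {..<h})"
  define TT where "TT i j = insert (h+j) (Sf i)" for i j
  define G where "G X = {s. \<forall>T\<in>itemsets d k. (freq T (DB X) > eps \<longrightarrow> Q s T) \<and> (freq T (DB X) < eps / 2 \<longrightarrow> \<not> Q s T)}" for X
  have n0: "n > 0"
  proof (rule ccontr)
    assume "\<not> n > 0"
    then have "n = 0" by simp
    then have "b = 0" using mbn m1 by simp
    then show False using beps \<open>n = 0\<close> by simp
  qed
  have DBin: "DB X \<in> databases n d" for X
    using mbn by (auto simp: databases_def DB_def row_def length_concat comp_def sum_list_triv)
  have Sfi: "Sf i \<subseteq> {..<h}" "card (Sf i) = k - 1" if "i < m" for i using Sf that by auto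
  have TTin: "TT i j \<in> itemsets d k" if "i < m" "j < h" for i j
  proof -
    have "h + j \<notin> Sf i" using Sfi[OF that(1)] by auto
    moreover have "finite (Sf i)" using Sfi[OF that(1)] finite_subset by blast
    ultimately have "card (TT i j) = k" using Sfi[OF that(1)] k2 by (simp add: TT_def)
    moreover have "TT i j \<subseteq> {..<d}" using Sfi[OF that(1)] that hd by (auto simp: TT_def)
    ultimately show ?thesis by (simp add: itemsets_def)
  qed
  have cont: "contains (row X i') (TT i j) \<longleftrightarrow> (i' = i \<and> j \<in> X i)"
    if "i < m" "j < h" "i' < m" for X i j i'
  proof -
    have rn: "row X i' ! t = (if t < h then t \<in> Sf i' else t - h \<in> X i')" if "t < d" for t
      using that by (simp add: row_def)
    have lt: "t < d" if "t \<in> TT i j" for t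
      using Sfi[OF \<open>i < m\<close>] \<open>j < h\<close> hd that by (auto simp: TT_def)
    have "contains (row X i') (TT i j) \<longleftrightarrow> (\<forall>t\<in>TT i j. if t < h then t \<in> Sf i' else t - h \<in> X i')"
      unfolding contains_def using rn lt by auto
    also have "\<dots> \<longleftrightarrow> (Sf i \<subseteq> Sf i' \<and> j \<in> X i')"
      using Sfi[OF that(1)] by (auto simp: TT_def subset_iff)
    finally have "contains (row X i') (TT i j) \<longleftrightarrow> (Sf i \<subseteq> Sf i' \<and> j \<in> X i')" .
    moreover have "Sf i \<subseteq> Sf i' \<longleftrightarrow> i' = i"
    proof
      assume "Sf i \<subseteq> Sf i'"
      moreover have "finite (Sf i')" using Sfi[OF that(3)] finite_subset by blast
      ultimately have "Sf i = Sf i'" using card_subset_eq Sfi[OF that(1)] Sfi[OF that(3)] by metis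
      then show "i' = i" using Sinj that by (auto dest: inj_onD)
    qed simp
    ultimately show ?thesis by auto
  qed
  have cont0: "\<not> contains (replicate d False) (TT i j)" if "j < h" for i j
    using that hd by (auto simp: contains_def TT_def)
  have freqTT: "freq (TT i j) (DB X) = (if j \<in> X i then real b else 0) / real n"
    if "i < m" "j < h" for X i j
  proof -
    have "length (filter (\<lambda>r. contains r (TT i j)) (DB X))
        = sum_list (map (\<lambda>i'. if i' = i \<and> j \<in> X i then b else 0) [0..<m])"
      using cont0[OF that(2)]
      apply (simp add: DB_def filter_concat length_concat comp_def filter_replicate)
      apply (rule arg_cong[where f=sum_list])
      apply (rule map_cong[OF refl])
      using cont[OF that] by auto
    also have "\<dots> = (if j \<in> X i then b else 0)"
      by (simp add: interv_sum_list_conv_sum_set_nat that)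
    finally show ?thesis using DBin[of X] by (simp add: freq_def databases_def)
  qed
  have disj: "G X \<inter> G Y = {}" if "X \<in> F" "Y \<in> F" "X \<noteq> Y" for X Y
  proof -
    have "\<exists>i<m. X i \<noteq> Y i"
    proof (rule ccontr)
      assume "\<not> (\<exists>i<m. X i \<noteq> Y i)"
      then have "\<And>i. i \<in> {..<m} \<Longrightarrow> X i = Y i" by auto
      then show False using PiE_ext[of X "{..<m}" _ Y] that unfolding F_def by blast
    qed
    then obtain i where i: "i < m" "X i \<noteq> Y i" by blast
    have "X i \<subseteq> {..<h}" "Y i \<subseteq> {..<h}" using that(1,2) i(1) unfolding F_def by (auto simp: PiE_iff)
    then obtain j where "j < h" "(j \<in> X i) \<noteq> (j \<in> Y i)" using i(2) by blast
    with i have ij: "i < m" "j < h" "(j \<in> X i) \<noteq> (j \<in> Y i)" by auto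
    have pos: "real b / real n > eps" using beps n0 by (simp add: field_simps)
    let ?T = "TT i j"
    have Tin: "?T \<in> itemsets d k" using TTin[OF ij(1,2)] .
    have hi: "freq ?T (DB Z) > eps" if "j \<in> Z i" for Z using freqTT[OF ij(1,2), of Z] that pos by simp
    have lo: "freq ?T (DB Z) < eps / 2" if "j \<notin> Z i" for Z using freqTT[OF ij(1,2), of Z] that eps by simp
    have q1: "Q s ?T" if "s \<in> G Z" "j \<in> Z i" for s Z
      using that(1) Tin hi[of Z, OF that(2)] unfolding G_def by blast
    have q2: "\<not> Q s ?T" if "s \<in> G Z" "j \<notin> Z i" for s Z
      using that(1) Tin lo[of Z, OF that(2)] unfolding G_def by blast
    show ?thesis
    proof (rule equals0I)
      fix s assume s: "s \<in> G X \<inter> G Y"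
      show False
      proof (cases "j \<in> X i")
        case True
        then have "j \<notin> Y i" using ij(3) by simp
        then show False using q1[of s X] q2[of s Y] s True by blast
      next
        case False
        then have "j \<in> Y i" using ij(3) by simp
        then show False using q1[of s Y] q2[of s X] s False by blast
      qed
    qed
  qed
  have ex: "\<exists>s. s \<in> set_pmf (S (DB X)) \<inter> G X" for X
  proof (rule ccontr)
    assume "\<not> ?thesis"
    then have "G X \<inter> set_pmf (S (DB X)) = {}" by auto
    then have "measure_pmf.prob (S (DB X)) (G X) = 0"
      by (metis measure_Int_set_pmf measure_empty)
    moreover have "measure_pmf.prob (S (DB X)) (G X) \<ge> 1 - delta"
      using valid DBin[of X] by (auto simp: valid_faifi_sketch_def G_def)
    ultimately show False using dl by simp
  qed
  define g where "g X = (SOME s. s \<in> set_pmf (S (DB X)) \<inter> G X)" for X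
  have g: "g X \<in> set_pmf (S (DB X)) \<inter> G X" for X
    unfolding g_def using ex[of X] by (rule someI_ex)
  have ginj: "inj_on g F"
  proof (rule inj_onI)
    fix X Y assume "X \<in> F" "Y \<in> F" "g X = g Y"
    then have "g X \<in> G X \<inter> G Y" using g[of X] g[of Y] by auto
    then show "X = Y" using disj[of X Y] \<open>X \<in> F\<close> \<open>Y \<in> F\<close> by auto
  qed
  have glen: "enat (length (g X)) \<le> space S n d" for X
  proof -
    have "enat (length (g X)) \<le> (SUP s\<in>set_pmf (S (DB X)). enat (length s))"
      using g[of X] by (intro SUP_upper) auto
    also have "\<dots> \<le> space S n d" unfolding space_def using DBin[of X] by (rule SUP_upper)
    finally show ?thesis .
  qed
  show ?thesis
  proof (cases "space S n d")
    case infinity then show ?thesis by simp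
  next
    case (enat L)
    have "g ` F \<subseteq> {xs. length xs \<le> L}" using glen enat by auto
    then have "card (g ` F) \<le> card {xs::bool list. length xs \<le> L}"
      by (rule card_mono[OF finite_bool_lists_le])
    moreover have "card (g ` F) = card F" using ginj by (rule card_image)
    moreover have "card F = (2^h)^m" by (simp add: F_def card_PiE card_Pow)
    ultimately have "(2::nat)^(h*m) < 2 ^ Suc L" using card_bool_lists_le[of L]
      by (simp add: power_mult)
    then have "h*m < Suc L" using power_less_imp_less_exp[of "2::nat" "h*m" "Suc L"] by simp
    then show ?thesis using enat by (simp add: mult.commute)
  qed
qed

theorem theorem2:
  fixes delta :: real
  assumes "delta < 1"
  shows "\<exists>c>0. \<forall>k n d (eps::real) S Q.
           k \<ge> 2 \<longrightarrow> 0 < eps \<longrightarrow> eps < 1 \<longrightarrow>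
           1 / eps \<le> real ((d div 2) choose (k - 1)) \<longrightarrow>
           real n \<ge> 1 / eps \<longrightarrow>
           valid_faifi_sketch S Q n d k eps delta \<longrightarrow>
           space S n d \<ge> ereal (c * real d / eps)"
proof (intro exI[of _ "1/16"] conjI allI impI)
  fix k n d S Q and eps :: real
  assume k2: "k \<ge> 2" and e0: "0 < eps" and e1: "eps < 1"
    and ch: "1 / eps \<le> real ((d div 2) choose (k - 1))" and nn: "real n \<ge> 1 / eps"
    and v: "valid_faifi_sketch S Q n d k eps delta"
  define h where "h = d div 2"
  define x where "x = 1 / (2*eps)"
  define m where "m = max 1 (nat \<lfloor>x\<rfloor>)"
  define b where "b = nat \<lfloor>eps * real n\<rfloor> + 1"
  have ie: "1 / eps > 0" using e0 by simp
  have h1: "h \<ge> 1"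
  proof (rule ccontr)
    assume "\<not> h \<ge> 1"
    then have "h = 0" by simp
    then have "(d div 2) choose (k - 1) = 0" using k2 by (simp add: h_def)
    then have "1 / eps \<le> 0" using ch by (metis of_nat_0)
    then show False using ie by linarith
  qed
  have hd: "2*h \<le> d" by (simp add: h_def)
  have dh: "real d \<le> 3 * real h" using h1 unfolding h_def by linarith
  have m1: "1 \<le> m" by (simp add: m_def)
  have enpos: "eps * real n \<ge> 0" using e0 by simp
  have rb: "real b = real_of_int \<lfloor>eps * real n\<rfloor> + 1" using enpos by (simp add: b_def)
  have beps: "real b > eps * real n" using rb by linarith
  have rbl: "real b \<le> eps * real n + 1" using rb by linarith
  have n1: "eps * real n \<ge> 1" using nn e0 by (simp add: field_simps)
  have "real m \<le> 1 / eps \<and> real (m*b) \<le> real n \<and> real d / eps / 16 \<le> real (m*h)"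
  proof (cases "eps \<le> 1/2")
    case True
    have x1: "x \<ge> 1" using True e0 by (simp add: x_def field_simps)
    have fx: "\<lfloor>x\<rfloor> \<ge> 1" using x1 by linarith
    then have "m = nat \<lfloor>x\<rfloor>" unfolding m_def by linarith
    then have m_eq: "real m = real_of_int \<lfloor>x\<rfloor>" using fx by simp
    have mx: "real m \<le> x" using m_eq by linarith
    have mx2: "real m \<ge> x / 2"
    proof (cases "x < 2")
      case True then show ?thesis using m_eq fx by linarith
    next
      case False then show ?thesis using m_eq by linarith
    qed
    have "x \<le> 1/eps" using e0 by (simp add: x_def field_simps)
    moreover have "real (m*b) \<le> real n"
    proof -
      have "real (m*b) = real m * real b" by simp
      also have "\<dots> \<le> x * (eps * real n + 1)"
        using mx rbl by (intro mult_mono) auto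
      also have "\<dots> = real n / 2 + x" using e0 by (simp add: x_def field_simps)
      also have "\<dots> \<le> real n" using nn e0 by (simp add: x_def field_simps)
      finally show ?thesis .
    qed
    moreover have "real d / eps / 16 \<le> real (m*h)"
    proof -
      have nn0: "real d / eps \<ge> 0" using e0 by simp
      have "(x/2) * (real d / 3) = real d / eps / 12" by (simp add: x_def)
      moreover have "real d / eps / 16 \<le> real d / eps / 12" using nn0 by (intro divide_left_mono) auto
      ultimately have "real d / eps / 16 \<le> (x/2) * (real d / 3)" by simp
      also have "\<dots> \<le> real m * real h" using mx2 dh x1 by (intro mult_mono) auto
      finally show ?thesis by simp
    qed
    ultimately show ?thesis using mx by simp
  next
    case False
    have x0: "x < 1" "x \<ge> 0" using False e0 by (auto simp: x_def field_simps)
    then have "\<lfloor>x\<rfloor> = 0" by linarith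
    then have m_eq: "m = 1" by (simp add: m_def)
    have "\<lfloor>eps * real n\<rfloor> < int n"
    proof -
      have "real n > 0" using n1 e0 by (metis mult_zero_right not_less not_one_le_zero of_nat_0_less_iff gr0I of_nat_0)
      then have "eps * real n < 1 * real n" using e1 by (intro mult_strict_right_mono) auto
      then show ?thesis by linarith
    qed
    moreover have "\<lfloor>eps * real n\<rfloor> \<ge> 0" using enpos by simp
    ultimately have "nat \<lfloor>eps * real n\<rfloor> < n" by (simp add: nat_less_iff)
    then have "b \<le> n" unfolding b_def by simp
    moreover have "real d / eps / 16 \<le> real h"
    proof -
      have ie2: "1 / eps \<le> 2" using False e0 by (simp add: divide_le_eq)
      have "real d / eps = real d * (1 / eps)" by simp
      also have "\<dots> \<le> real d * 2" using ie2 by (intro mult_left_mono) auto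
      finally have "real d / eps \<le> 2 * real d" by simp
      then show ?thesis using dh aux_lin of_nat_0_le_iff by blast
    qed
    moreover have "real m \<le> 1 / eps" using m_eq e0 e1 by (simp add: le_divide_eq)
    ultimately show ?thesis using m_eq by simp
  qed
  then have mle: "real m \<le> 1 / eps" and mb: "m*b \<le> n" and fin: "real d / eps / 16 \<le> real (m*h)"
    by (auto simp only: of_nat_le_iff)
  have mch: "m \<le> h choose (k - 1)" using mle ch unfolding h_def by linarith
  have "enat (m*h) \<le> space S n d"
    using core[OF k2 hd m1 mch mb beps e0 v assms] .
  then have "ereal_of_enat (enat (m*h)) \<le> ereal_of_enat (space S n d)"
    by (simp only: ereal_of_enat_le_iff)
  then have "ereal (real (m*h)) \<le> ereal_of_enat (space S n d)" by simp
  moreover have "ereal (1/16 * real d / eps) \<le> ereal (real (m*h))" using fin by simp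
  ultimately show "ereal (1/16 * real d / eps) \<le> ereal_of_enat (space S n d)" by (rule order_trans[rotated])
qed (simp)

end
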